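(* Let $P$ be a finite set of points in the plane in general position with $|P|$ even, and let $A\subseteq P$ be the union of the vertex sets of some connected components of the underlying graph of $P$. If $a,b\in A$ and the line through $a$ and $b$ is a halving line of $P$, then the two open half-planes determined by this line contain equally many points of $A$.
   Context: Points are in general position if no three are collinear. For a finite set $P$ of $n$ points in general position with $n$ even, a halving line of $P$ is a line through two points of $P$ that has exactly $(n-2)/2$ points of $P$ strictly on each side. The underlying graph of $P$ has vertex set $P$, and two points are adjacent if and only if the line through them is a halving line of $P$. *)

theory Defs
  imports Complex_Main
begin

type_synonym point = "real \<times> real"

text \<open>Orientation (signed doubled area) of the triangle a b c; its sign tells on which
  side of the line through a and b the point c lies (0 = on the line).\<close>
definition orient :: "point \<Rightarrow> point \<Rightarrow> point \<Rightarrow> real" where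
  "orient a b c = (fst b - fst a) * (snd c - snd a) - (snd b - snd a) * (fst c - fst a)"

definition collinear3 :: "point \<Rightarrow> point \<Rightarrow> point \<Rightarrow> bool" where
  "collinear3 a b c \<longleftrightarrow> orient a b c = 0"

definition general_position :: "point set \<Rightarrow> bool" where
  "general_position P \<longleftrightarrow>
     (\<forall>a\<in>P. \<forall>b\<in>P. \<forall>c\<in>P. a \<noteq> b \<and> a \<noteq> c \<and> b \<noteq> c \<longrightarrow> \<not> collinear3 a b c)"

definition left_side :: "point set \<Rightarrow> point \<Rightarrow> point \<Rightarrow> point set" where
  "left_side S a b = {p \<in> S. orient a b p > 0}"

definition right_side :: "point set \<Rightarrow> point \<Rightarrow> point \<Rightarrow> point set" where
  "right_side S a b = {p \<in> S. orient a b p < 0}"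

definition halving_line :: "point set \<Rightarrow> point \<Rightarrow> point \<Rightarrow> bool" where
  "halving_line P a b \<longleftrightarrow> a \<in> P \<and> b \<in> P \<and> a \<noteq> b \<and>
     card (left_side P a b) = (card P - 2) div 2 \<and>
     card (right_side P a b) = (card P - 2) div 2"

definition ug_adj :: "point set \<Rightarrow> point \<Rightarrow> point \<Rightarrow> bool" where
  "ug_adj P a b \<longleftrightarrow> halving_line P a b"

definition ug_component :: "point set \<Rightarrow> point \<Rightarrow> point set" where
  "ug_component P v = {w \<in> P. (ug_adj P)\<^sup>*\<^sup>* v w}"

definition ug_components :: "point set \<Rightarrow> point set set" where
  "ug_components P = ug_component P ` P"

end

theory Submission imports Defs begin


definition rk :: "point set \<Rightarrow> (point \<Rightarrow> real) \<Rightarrow> point \<Rightarrow> nat" where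
  "rk P f p = card {q\<in>P. f q > f p}"
definition rke :: "point set \<Rightarrow> (point \<Rightarrow> real) \<Rightarrow> point \<Rightarrow> nat" where
  "rke P f p = card {q\<in>P. f q \<ge> f p}"
definition wt :: "point set \<Rightarrow> nat \<Rightarrow> (point \<Rightarrow> real) \<Rightarrow> point \<Rightarrow> real" where
  "wt P N f p = (if rke P f p \<le> N then 1 else if rk P f p < N then 1/2 else 0)"

lemma pt_nopartner:
  fixes f f0 :: "point \<Rightarrow> real"
  assumes "p \<in> P"
    and h1: "\<forall>x\<in>P. \<forall>y\<in>P. f0 x > f0 y \<longrightarrow> f x > f y"
    and np: "\<forall>q\<in>P. f0 q = f0 p \<longrightarrow> q = p"
  shows "wt P N f p = wt P N f0 p"
proof -
  have e1: "{q\<in>P. f q > f p} = {q\<in>P. f0 q > f0 p}"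
  proof (intro set_eqI iffI)
    fix x assume "x \<in> {q\<in>P. f q > f p}"
    then have x: "x \<in> P" "f x > f p" by auto
    have "\<not> f0 x < f0 p" using h1 x assms(1) by force
    moreover have "f0 x \<noteq> f0 p" using np x by auto
    ultimately show "x \<in> {q\<in>P. f0 q > f0 p}" using x by auto
  qed (use h1 assms(1) in auto)
  have e2: "{q\<in>P. f q \<ge> f p} = {q\<in>P. f0 q \<ge> f0 p}"
  proof (intro set_eqI iffI)
    fix x assume "x \<in> {q\<in>P. f q \<ge> f p}"
    then have x: "x \<in> P" "f x \<ge> f p" by auto
    have "\<not> f0 x < f0 p" using h1 x assms(1) by force
    then show "x \<in> {q\<in>P. f0 q \<ge> f0 p}" using x by auto
  next
    fix x assume "x \<in> {q\<in>P. f0 q \<ge> f0 p}"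
    then have x: "x \<in> P" "f0 x \<ge> f0 p" by auto
    show "x \<in> {q\<in>P. f q \<ge> f p}"
    proof (cases "f0 x = f0 p")
      case True then show ?thesis using np x by auto
    next
      case False then show ?thesis using h1 x assms(1) by force
    qed
  qed
  show ?thesis unfolding wt_def rk_def rke_def e1 e2 ..
qed

lemma pt_partner_sets:
  fixes f f0 :: "point \<Rightarrow> real"
  assumes "p \<in> P" "q \<in> P" "p \<noteq> q" "f0 p = f0 q" "f p \<noteq> f q"
    and h1: "\<forall>x\<in>P. \<forall>y\<in>P. f0 x > f0 y \<longrightarrow> f x > f y"
    and h3: "\<forall>x\<in>P. f0 x = f0 p \<longrightarrow> x = p \<or> x = q"
  shows "{x\<in>P. f x > f p} = {x\<in>P. f0 x > f0 p} \<union> (if f q > f p then {q} else {})"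
    and "{x\<in>P. f x \<ge> f p} = insert p ({x\<in>P. f0 x > f0 p} \<union> (if f q > f p then {q} else {}))"
    and "{x\<in>P. f0 x \<ge> f0 p} = insert p (insert q {x\<in>P. f0 x > f0 p})"
proof -
  have A: "x \<in> P \<Longrightarrow> f0 x > f0 p \<Longrightarrow> f x > f p" for x using h1 assms(1) by blast
  have B: "x \<in> P \<Longrightarrow> f0 x < f0 p \<Longrightarrow> f x < f p" for x using h1 assms(1) by blast
  have C: "x \<in> P \<Longrightarrow> f0 x = f0 p \<Longrightarrow> x = p \<or> x = q" for x using h3 by blast
  show "{x\<in>P. f x > f p} = {x\<in>P. f0 x > f0 p} \<union> (if f q > f p then {q} else {})"
  proof (intro set_eqI iffI)
    fix x assume "x \<in> {x\<in>P. f x > f p}"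
    then have x: "x \<in> P" "f x > f p" by auto
    show "x \<in> {x\<in>P. f0 x > f0 p} \<union> (if f q > f p then {q} else {})"
    proof (cases "f0 x" "f0 p" rule: linorder_cases)
      case less then show ?thesis using B[OF x(1) less] x(2) by linarith
    next
      case equal then have "x = p \<or> x = q" using C x by auto
      then show ?thesis using x by (cases "x = p") auto
    qed (use x in auto)
  qed (use A assms(2) in \<open>auto split: if_splits\<close>)
  show "{x\<in>P. f x \<ge> f p} = insert p ({x\<in>P. f0 x > f0 p} \<union> (if f q > f p then {q} else {}))"
  proof (intro set_eqI iffI)
    fix x assume "x \<in> {x\<in>P. f x \<ge> f p}"
    then have x: "x \<in> P" "f x \<ge> f p" by auto
    show "x \<in> insert p ({x\<in>P. f0 x > f0 p} \<union> (if f q > f p then {q} else {}))"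
    proof (cases "f0 x" "f0 p" rule: linorder_cases)
      case less then show ?thesis using B[OF x(1) less] x(2) by linarith
    next
      case equal then have "x = p \<or> x = q" using C x by auto
      then show ?thesis using x assms(5) by (cases "x = p") auto
    qed (use x in auto)
  qed (use A[THEN less_imp_le] assms(1,2) in \<open>auto split: if_splits\<close>)
  show "{x\<in>P. f0 x \<ge> f0 p} = insert p (insert q {x\<in>P. f0 x > f0 p})"
    using C assms by auto
qed

lemma pt_partner_D:
  fixes f f0 :: "point \<Rightarrow> real"
  assumes fin: "finite P" and pq: "p \<in> P" "q \<in> P" "p \<noteq> q" "f0 p = f0 q" "f p \<noteq> f q"
    and h1: "\<forall>x\<in>P. \<forall>y\<in>P. f0 x > f0 y \<longrightarrow> f x > f y"
    and h3: "\<forall>x\<in>P. f0 x = f0 p \<longrightarrow> x = p \<or> x = q"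
  shows "wt P N f p - wt P N f0 p =
     (if rk P f0 p + 1 = N then (if f q > f p then -1/2 else 1/2) else 0)"
proof -
  note S = pt_partner_sets[OF pq h1 h3]
  define G where "G = {x\<in>P. f0 x > f0 p}"
  have fG: "finite G" using fin unfolding G_def by auto
  have pG: "p \<notin> G" "q \<notin> G" using pq unfolding G_def by auto
  have r0: "rk P f0 p = card G" unfolding rk_def G_def ..
  have r1: "rk P f p = card G + (if f q > f p then 1 else 0)"
    unfolding rk_def S(1) G_def[symmetric] using fG pG by auto
  have r2: "rke P f p = card G + 1 + (if f q > f p then 1 else 0)"
    unfolding rke_def S(2) G_def[symmetric] using fG pG pq(3) by auto
  have r3: "rke P f0 p = card G + 2"
    unfolding rke_def S(3) G_def[symmetric] using fG pG pq(3) by auto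
  show ?thesis unfolding wt_def r0 r1 r2 r3 by auto
qed

lemma comb:
  fixes f f0 :: "point \<Rightarrow> real"
  assumes fin: "finite P" and AP: "A \<subseteq> P"
    and h1: "\<forall>x\<in>P. \<forall>y\<in>P. f0 x > f0 y \<longrightarrow> f x > f y"
    and h2: "\<forall>x\<in>P. \<forall>y\<in>P. x \<noteq> y \<and> f0 x = f0 y \<longrightarrow> f x \<noteq> f y"
    and h3: "\<forall>x\<in>P. \<forall>y\<in>P. \<forall>z\<in>P. x \<noteq> y \<and> f0 x = f0 y \<and> f0 z = f0 x \<longrightarrow> z = x \<or> z = y"
    and h4: "\<forall>x\<in>P. \<forall>y\<in>P. x \<noteq> y \<and> f0 x = f0 y \<and> rk P f0 x + 1 = N \<longrightarrow> (x \<in> A \<longleftrightarrow> y \<in> A)"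
  shows "(\<Sum>p\<in>A. wt P N f p) = (\<Sum>p\<in>A. wt P N f0 p)"
proof -
  define D where "D p = wt P N f p - wt P N f0 p" for p
  define part where "part p = (SOME q. q \<in> P \<and> q \<noteq> p \<and> f0 q = f0 p)" for p
  define \<sigma> where "\<sigma> p = (if (\<exists>q\<in>P. q \<noteq> p \<and> f0 q = f0 p) \<and> rk P f0 p + 1 = N then part p else p)" for p
  have rkeq: "rk P f0 q = rk P f0 p" if "f0 q = f0 p" for p q unfolding rk_def using that by simp
  have key: "\<sigma> p \<in> A \<and> \<sigma> (\<sigma> p) = p \<and> D (\<sigma> p) = - D p" if pA: "p \<in> A" for p
  proof (cases "\<exists>q\<in>P. q \<noteq> p \<and> f0 q = f0 p")
    case False
    have pP: "p \<in> P" using pA AP by auto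
    have "D p = 0" unfolding D_def using pt_nopartner[OF pP h1] False by auto
    then show ?thesis using False pA unfolding \<sigma>_def by auto
  next
    case True
    then have q: "part p \<in> P" "part p \<noteq> p" "f0 (part p) = f0 p"
      unfolding part_def by (metis (mono_tags, lifting) someI_ex)+
    define q where "q = part p"
    have pP: "p \<in> P" using pA AP by auto
    have h3p: "\<forall>x\<in>P. f0 x = f0 p \<longrightarrow> x = p \<or> x = q"
      using h3 q pP unfolding q_def by metis
    have h3q: "\<forall>x\<in>P. f0 x = f0 q \<longrightarrow> x = q \<or> x = p"
      using h3p q unfolding q_def by auto
    have fne: "f p \<noteq> f q" using h2 q pP unfolding q_def by metis
    have Dp: "D p = (if rk P f0 p + 1 = N then (if f q > f p then -1/2 else 1/2) else 0)"
      unfolding D_def using pt_partner_D[OF fin pP q(1)[folded q_def] q(2)[folded q_def, symmetric] q(3)[folded q_def, symmetric] fne h1 h3p] .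
    have Dq: "D q = (if rk P f0 p + 1 = N then (if f p > f q then -1/2 else 1/2) else 0)"
      unfolding D_def using pt_partner_D[OF fin q(1)[folded q_def] pP q(2)[folded q_def] q(3)[folded q_def] fne[symmetric] h1 h3q]
        rkeq[OF q(3)[folded q_def]] by simp
    show ?thesis
    proof (cases "rk P f0 p + 1 = N")
      case False
      then show ?thesis using pA Dp unfolding \<sigma>_def by auto
    next
      case rT: True
      have sp: "\<sigma> p = q" unfolding \<sigma>_def q_def using True rT by auto
      have qA: "q \<in> A" using h4 pP q pA rT unfolding q_def by metis
      have ex: "\<exists>x\<in>P. x \<noteq> q \<and> f0 x = f0 q" using pP q unfolding q_def by metis
      then have pq': "part q \<in> P" "part q \<noteq> q" "f0 (part q) = f0 q"
        unfolding part_def by (metis (mono_tags, lifting) someI_ex)+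
      then have "part q = p" using h3q by auto
      then have sq: "\<sigma> q = p" unfolding \<sigma>_def using ex rT rkeq[OF q(3)[folded q_def]] by auto
      show ?thesis using sp sq qA Dp Dq fne by auto
    qed
  qed
  have "(\<Sum>p\<in>A. - D p) = (\<Sum>p\<in>A. D p)"
    by (rule sum.reindex_bij_witness[where i=\<sigma> and j=\<sigma>]) (use key in auto)
  then have "(\<Sum>p\<in>A. D p) = 0" by (simp add: sum_negf)
  then show ?thesis unfolding D_def by (simp add: sum_subtractf)
qed


lemma orient_swap: "orient b a c = - orient a b c"
  unfolding orient_def by (simp add: algebra_simps)

lemma halving_sym: "halving_line P a b \<Longrightarrow> halving_line P b a"
proof -
  have "left_side P b a = right_side P a b" "right_side P b a = left_side P a b"
    unfolding left_side_def right_side_def using orient_swap[of b a] by auto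
  then show "halving_line P a b \<Longrightarrow> halving_line P b a" unfolding halving_line_def by auto
qed

lemma comp_closed:
  assumes "\<exists>C \<subseteq> ug_components P. A = \<Union>C" "halving_line P p q" "p \<in> A"
  shows "q \<in> A"
proof -
  obtain C where C: "C \<subseteq> ug_components P" "A = \<Union>C" using assms(1) by blast
  obtain K where K: "K \<in> C" "p \<in> K" using C assms(3) by auto
  obtain v where v: "v \<in> P" "K = ug_component P v" using C K unfolding ug_components_def by auto
  have "(ug_adj P)\<^sup>*\<^sup>* v p" using K v unfolding ug_component_def by auto
  moreover have "ug_adj P p q" using assms(2) unfolding ug_adj_def .
  ultimately have "(ug_adj P)\<^sup>*\<^sup>* v q" by auto
  moreover have "q \<in> P" using assms(2) unfolding halving_line_def by auto
  ultimately have "q \<in> K" using v unfolding ug_component_def by auto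
  then show ?thesis using C K by auto
qed

lemma cramer:
  fixes ux uy ex ey fx fy :: real
  assumes "ux * ex + uy * ey = 0" "ux * fx + uy * fy = 0" "(ux, uy) \<noteq> (0, 0)"
  shows "ex * fy - ey * fx = 0"
proof (rule ccontr)
  assume c: "ex * fy - ey * fx \<noteq> 0"
  have "ux * (ex * fy - ey * fx) = (ux * ex + uy * ey) * fy - (ux * fx + uy * fy) * ey"
    by (simp add: algebra_simps)
  then have "ux = 0" using assms c by simp
  have "uy * (ex * fy - ey * fx) = (ux * fx + uy * fy) * ex - (ux * ex + uy * ey) * fx"
    by (simp add: algebra_simps)
  then have "uy = 0" using assms c by simp
  then show False using \<open>ux = 0\<close> assms by simp
qed

lemma side_identity:
  fixes ux uy ex ey vx vy :: real
  assumes "ux * ex + uy * ey = 0"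
  shows "(ux * vx + uy * vy) * (ex^2 + ey^2) = (uy * ex - ux * ey) * (ex * vy - ey * vx)"
proof -
  have "(ux * vx + uy * vy) * (ex^2 + ey^2) - (uy * ex - ux * ey) * (ex * vy - ey * vx)
      = (ux * ex + uy * ey) * (vx * ex + vy * ey)"
    by algebra
  then show ?thesis using assms by simp
qed

lemma mu_nz:
  fixes ux uy ex ey :: real
  assumes "ux * ex + uy * ey = 0" "(ux, uy) \<noteq> (0, 0)" "(ex, ey) \<noteq> (0, 0)"
  shows "uy * ex - ux * ey \<noteq> 0"
proof
  assume "uy * ex - ux * ey = 0"
  have "(ux^2 + uy^2) * (ex^2 + ey^2) = (ux * ex + uy * ey)^2 + (uy * ex - ux * ey)^2"
    by algebra
  then have "(ux^2 + uy^2) * (ex^2 + ey^2) = 0" using assms \<open>uy * ex - ux * ey = 0\<close> by simp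
  moreover have "ux^2 + uy^2 > 0" using assms(2) by (simp add: sum_power2_gt_zero_iff)
  moreover have "ex^2 + ey^2 > 0" using assms(3) by (simp add: sum_power2_gt_zero_iff)
  ultimately show False by (metis mult_pos_pos less_irrefl)
qed

lemma sin_nz: "0 < \<bar>x\<bar> \<Longrightarrow> \<bar>x\<bar> < pi \<Longrightarrow> sin x \<noteq> 0"
proof -
  assume a: "0 < \<bar>x\<bar>" "\<bar>x\<bar> < pi"
  show ?thesis
  proof (cases "x > 0")
    case True then show ?thesis using a sin_gt_zero by fastforce
  next
    case False
    then have "sin (-x) > 0" using a by (intro sin_gt_zero) auto
    then show ?thesis by simp
  qed
qed


definition phi :: "real \<Rightarrow> real \<Rightarrow> real \<Rightarrow> point \<Rightarrow> real" where
  "phi dx dy t p = (cos t * (- dy) + sin t * dx) * fst p + (cos t * dx + sin t * dy) * snd p"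

definition psi :: "real \<Rightarrow> real \<Rightarrow> real \<Rightarrow> point \<Rightarrow> real" where
  "psi dx dy t p = (- sin t * (- dy) + cos t * dx) * fst p + (- sin t * dx + cos t * dy) * snd p"

lemma u_nz:
  assumes "(dx, dy) \<noteq> (0::real, 0::real)"
  shows "(cos t * (- dy) + sin t * dx, cos t * dx + sin t * dy) \<noteq> (0, 0)"
proof
  assume a: "(cos t * (- dy) + sin t * dx, cos t * dx + sin t * dy) = (0, 0)"
  have "(cos t * (- dy) + sin t * dx)^2 + (cos t * dx + sin t * dy)^2
      = ((sin t)^2 + (cos t)^2) * (dx^2 + dy^2)" by algebra
  then have "dx^2 + dy^2 = 0" using a by simp
  then show False using assms by (simp add: sum_power2_eq_zero_iff)
qed

lemma phi_psi:
  "phi dx dy t p = cos (t - t0) * phi dx dy t0 p + sin (t - t0) * psi dx dy t0 p"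
proof -
  have "phi dx dy (h + t0) p = cos h * phi dx dy t0 p + sin h * psi dx dy t0 p" for h
    unfolding phi_def psi_def cos_add sin_add by algebra
  from this[of "t - t0"] show ?thesis by simp
qed

lemma three_equal:
  assumes "(dx, dy) \<noteq> (0::real, 0::real)"
    and "phi dx dy t p = phi dx dy t q" "phi dx dy t r = phi dx dy t p"
  shows "orient p q r = 0"
proof -
  define ux where "ux = cos t * (- dy) + sin t * dx"
  define uy where "uy = cos t * dx + sin t * dy"
  have f: "phi dx dy t x = ux * fst x + uy * snd x" for x unfolding phi_def ux_def uy_def ..
  have "(fst q - fst p) * (snd r - snd p) - (snd q - snd p) * (fst r - fst p) = 0"
    apply (rule cramer[where ux=ux and uy=uy])
    using assms f u_nz[OF assms(1), of t] unfolding ux_def[symmetric] uy_def[symmetric]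
    by (auto simp: algebra_simps)
  then show ?thesis unfolding orient_def .
qed

lemma gp_three:
  assumes "general_position P" "(dx, dy) \<noteq> (0::real, 0::real)"
  shows "\<forall>x\<in>P. \<forall>y\<in>P. \<forall>z\<in>P. x \<noteq> y \<and> phi dx dy t x = phi dx dy t y \<and> phi dx dy t z = phi dx dy t x
          \<longrightarrow> z = x \<or> z = y"
  using assms three_equal[OF assms(2)] unfolding general_position_def collinear3_def by metis


lemma halv:
  assumes fin: "finite P" and gp: "general_position P" and cP: "card P = 2 * N"
    and pq: "p \<in> P" "q \<in> P" "p \<noteq> q" and eq: "phi dx dy t p = phi dx dy t q"
    and rkN: "rk P (phi dx dy t) p + 1 = N" and d: "(dx, dy) \<noteq> (0::real, 0::real)"
  shows "halving_line P p q"
proof -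
  define f where "f = phi dx dy t"
  define ux where "ux = cos t * (- dy) + sin t * dx"
  define uy where "uy = cos t * dx + sin t * dy"
  have fx: "f x = ux * fst x + uy * snd x" for x unfolding f_def phi_def ux_def uy_def ..
  define ex where "ex = fst q - fst p"
  define ey where "ey = snd q - snd p"
  have ue: "ux * ex + uy * ey = 0" using eq unfolding ex_def ey_def f_def[symmetric] fx
    by (simp add: algebra_simps)
  have unz: "(ux, uy) \<noteq> (0, 0)" using u_nz[OF d, of t] unfolding ux_def uy_def .
  have enz: "(ex, ey) \<noteq> (0, 0)" using pq(3) unfolding ex_def ey_def by (auto simp: prod_eq_iff)
  define \<mu> where "\<mu> = uy * ex - ux * ey"
  have mu: "\<mu> \<noteq> 0" unfolding \<mu>_def by (rule mu_nz[OF ue unz enz])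
  define E where "E = ex^2 + ey^2"
  have E: "E > 0" using enz unfolding E_def by (simp add: sum_power2_gt_zero_iff)
  have iden: "(f x - f p) * E = \<mu> * orient p q x" for x
  proof -
    have "(ux * (fst x - fst p) + uy * (snd x - snd p)) * (ex^2 + ey^2)
        = (uy * ex - ux * ey) * (ex * (snd x - snd p) - ey * (fst x - fst p))"
      by (rule side_identity[OF ue])
    then show ?thesis unfolding E_def \<mu>_def orient_def ex_def ey_def fx
      by (simp add: algebra_simps)
  qed
  have gt: "f x > f p \<longleftrightarrow> \<mu> * orient p q x > 0" for x
    using iden[of x] E by (metis mult_pos_pos zero_less_mult_pos2 diff_gt_0_iff_gt
        less_irrefl mult_eq_0_iff linorder_neqE_linordered_idom zero_less_mult_iff)
  have lt: "f x < f p \<longleftrightarrow> \<mu> * orient p q x < 0" for x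
    using iden[of x] E by (metis diff_less_0_iff_less mult_less_0_iff not_less_iff_gr_or_eq)
  define Gp where "Gp = {x\<in>P. f x > f p}"
  define Gm where "Gm = {x\<in>P. f x < f p}"
  have cGp: "card Gp + 1 = N" using rkN unfolding Gp_def rk_def f_def .
  have three: "x \<in> P \<Longrightarrow> f x = f p \<Longrightarrow> x = p \<or> x = q" for x
    using gp_three[OF gp d, of t] pq eq unfolding f_def by metis
  have Pdec: "P = Gp \<union> Gm \<union> {p, q}"
    unfolding Gp_def Gm_def using three pq by (auto, metis linorder_neqE_linordered_idom)
  have fG: "finite Gp" "finite Gm" using fin unfolding Gp_def Gm_def by auto
  have c1: "card (Gp \<union> Gm) = card Gp + card Gm"
    by (rule card_Un_disjoint) (use fG in \<open>auto simp: Gp_def Gm_def\<close>)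
  have c2: "card (Gp \<union> Gm \<union> {p, q}) = card (Gp \<union> Gm) + card {p, q}"
    by (rule card_Un_disjoint) (use fG pq eq in \<open>auto simp: Gp_def Gm_def f_def\<close>)
  have "card P = card Gp + card Gm + 2"
    using Pdec c1 c2 pq(3) by simp
  then have cGm: "card Gm + 1 = N" using cGp cP by simp
  have half: "(card P - 2) div 2 = N - 1" using cP cGp by simp
  show ?thesis
  proof (cases "\<mu> > 0")
    case True
    have "left_side P p q = Gp" "right_side P p q = Gm"
      unfolding left_side_def right_side_def Gp_def Gm_def gt lt
      using True by (auto simp: zero_less_mult_iff mult_less_0_iff)
    then show ?thesis unfolding halving_line_def half using pq cGp cGm by auto
  next
    case False
    then have m: "\<mu> < 0" using mu by simp
    have "left_side P p q = Gm" "right_side P p q = Gp"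
      unfolding left_side_def right_side_def Gp_def Gm_def gt lt
      using m by (auto simp: zero_less_mult_iff mult_less_0_iff)
    then show ?thesis unfolding halving_line_def half using pq cGp cGm by auto
  qed
qed


lemma endpt:
  fixes \<psi> :: "point \<Rightarrow> real"
  assumes fin: "finite P" and AP: "A \<subseteq> P" and ab: "a \<in> A" "b \<in> A" "a \<noteq> b"
    and c: "\<psi> a = c" "\<psi> b = c" and oth: "\<forall>x\<in>P. x \<noteq> a \<and> x \<noteq> b \<longrightarrow> \<psi> x \<noteq> c"
    and cg: "card {x\<in>P. \<psi> x > c} + 1 = N"
  shows "(\<Sum>p\<in>A. wt P N \<psi> p) = real (card {x\<in>A. \<psi> x > c}) + 1"
proof -
  define G where "G = {x\<in>P. \<psi> x > c}"
  have fG: "finite G" using fin unfolding G_def by auto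
  have abP: "a \<in> P" "b \<in> P" using ab AP by auto
  have Ge: "{x\<in>P. \<psi> x \<ge> c} = insert a (insert b G)"
    unfolding G_def using oth abP c by force
  have cGe: "card (insert a (insert b G)) = N + 1"
    using fG ab(3) c cg unfolding G_def by auto
  have w: "wt P N \<psi> p = (if \<psi> p > c then 1 else 0) + (if p = a then 1/2 else 0) + (if p = b then 1/2 else 0)"
    if pA: "p \<in> A" for p
  proof -
    have pP: "p \<in> P" using pA AP by auto
    consider "\<psi> p > c" | "p = a" | "p = b" | "\<psi> p < c"
      using oth pP by (metis linorder_neqE_linordered_idom)
    then show ?thesis
    proof cases
      case 1
      have "{x\<in>P. \<psi> x \<ge> \<psi> p} \<subseteq> G" unfolding G_def using 1 by auto
      then have "rke P \<psi> p \<le> card G" unfolding rke_def by (rule card_mono[OF fG])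
      then have "rke P \<psi> p \<le> N" using cg unfolding G_def by simp
      moreover have "p \<noteq> a" "p \<noteq> b" using 1 c by auto
      ultimately show ?thesis using 1 unfolding wt_def by simp
    next
      case 2
      have "rk P \<psi> p = card G" unfolding rk_def G_def using 2 c by simp
      moreover have "rke P \<psi> p = N + 1" unfolding rke_def using 2 c Ge cGe by simp
      ultimately show ?thesis using 2 c ab(3) cg unfolding wt_def G_def by simp
    next
      case 3
      have "rk P \<psi> p = card G" unfolding rk_def G_def using 3 c by simp
      moreover have "rke P \<psi> p = N + 1" unfolding rke_def using 3 c Ge cGe by simp
      ultimately show ?thesis using 3 c ab(3) cg unfolding wt_def G_def by simp
    next
      case 4
      have "insert a (insert b G) \<subseteq> {x\<in>P. \<psi> x > \<psi> p}" using 4 c abP unfolding G_def by auto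
      then have "N + 1 \<le> rk P \<psi> p" unfolding rk_def using cGe
        by (metis (no_types, lifting) card_mono fin finite_subset mem_Collect_eq subsetI)
      moreover have "rk P \<psi> p \<le> rke P \<psi> p" unfolding rk_def rke_def
        by (rule card_mono) (use fin in auto)
      moreover have "p \<noteq> a" "p \<noteq> b" using 4 c by auto
      ultimately show ?thesis using 4 unfolding wt_def by simp
    qed
  qed
  have "(\<Sum>p\<in>A. wt P N \<psi> p) = (\<Sum>p\<in>A. (if \<psi> p > c then 1 else 0) + (if p = a then 1/2 else 0) + (if p = b then (1/2::real) else 0))"
    using w by (rule sum.cong[OF refl])
  also have "\<dots> = (\<Sum>p\<in>A. if \<psi> p > c then 1 else 0) + (\<Sum>p\<in>A. if p = a then 1/2 else 0) + (\<Sum>p\<in>A. if p = b then (1/2::real) else 0)"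
    by (simp add: sum.distrib)
  also have "\<dots> = real (card {x\<in>A. \<psi> x > c}) + 1"
    using ab fin AP finite_subset[OF AP fin] by (simp add: sum.If_cases Int_def)
  finally show ?thesis .
qed


lemma psi_diff_nz:
  assumes d: "(dx, dy) \<noteq> (0::real, 0::real)" and pq: "p \<noteq> q"
    and eq: "phi dx dy t p = phi dx dy t q"
  shows "psi dx dy t p \<noteq> psi dx dy t q"
proof
  assume eq2: "psi dx dy t p = psi dx dy t q"
  define ux where "ux = cos t * (- dy) + sin t * dx"
  define uy where "uy = cos t * dx + sin t * dy"
  define vx where "vx = - sin t * (- dy) + cos t * dx"
  define vy where "vy = - sin t * dx + cos t * dy"
  define ex where "ex = fst p - fst q"
  define ey where "ey = snd p - snd q"
  have 1: "ex * ux + ey * uy = 0" using eq unfolding phi_def ux_def uy_def ex_def ey_def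
    by (simp add: algebra_simps)
  have 2: "ex * vx + ey * vy = 0" using eq2 unfolding psi_def vx_def vy_def ex_def ey_def
    by (simp add: algebra_simps)
  have enz: "(ex, ey) \<noteq> (0, 0)" using pq unfolding ex_def ey_def by (auto simp: prod_eq_iff)
  have "ux * vy - uy * vx = 0" by (rule cramer[OF 1 2 enz])
  moreover have "ux * vy - uy * vx = - (((sin t)^2 + (cos t)^2) * (dx^2 + dy^2))"
    unfolding ux_def uy_def vx_def vy_def by algebra
  ultimately have "((sin t)^2 + (cos t)^2) * (dx^2 + dy^2) = 0" by linarith
  then have "dx = 0 \<and> dy = 0" by simp
  then show False using d by simp
qed

lemma locconst:
  assumes fin: "finite P" and AP: "A \<subseteq> P" and gp: "general_position P" and cP: "card P = 2 * N"
    and d: "(dx, dy) \<noteq> (0::real, 0::real)"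
    and cl: "\<And>x y. halving_line P x y \<Longrightarrow> x \<in> A \<Longrightarrow> y \<in> A"
  shows "eventually (\<lambda>t. (\<Sum>p\<in>A. wt P N (phi dx dy t0) p) = (\<Sum>p\<in>A. wt P N (phi dx dy t) p)) (at t0)"
proof -
  have E1: "\<forall>p\<in>P. eventually (\<lambda>t. \<forall>q\<in>P. phi dx dy t0 p > phi dx dy t0 q \<longrightarrow> phi dx dy t p > phi dx dy t q) (at t0)"
  proof (intro ballI eventually_ball_finite[OF fin])
    fix p q
    show "eventually (\<lambda>t. phi dx dy t0 p > phi dx dy t0 q \<longrightarrow> phi dx dy t p > phi dx dy t q) (at t0)"
    proof (cases "phi dx dy t0 p > phi dx dy t0 q")
      case True
      have "((\<lambda>t. phi dx dy t p - phi dx dy t q) \<longlongrightarrow> phi dx dy t0 p - phi dx dy t0 q) (at t0)"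
        unfolding phi_def by (intro tendsto_intros)
      from order_tendstoD(1)[OF this, of 0] True
      show ?thesis by (auto elim: eventually_mono)
    qed auto
  qed
  have E2: "\<forall>p\<in>P. eventually (\<lambda>t. \<forall>q\<in>P. p \<noteq> q \<and> phi dx dy t0 p = phi dx dy t0 q \<longrightarrow> phi dx dy t p \<noteq> phi dx dy t q) (at t0)"
  proof (intro ballI eventually_ball_finite[OF fin])
    fix p q
    show "eventually (\<lambda>t. p \<noteq> q \<and> phi dx dy t0 p = phi dx dy t0 q \<longrightarrow> phi dx dy t p \<noteq> phi dx dy t q) (at t0)"
      unfolding eventually_at
    proof (intro exI[of _ pi] conjI ballI impI pi_gt_zero)
      fix t assume "t \<in> UNIV" and t: "t \<noteq> t0 \<and> dist t t0 < pi" and h: "p \<noteq> q \<and> phi dx dy t0 p = phi dx dy t0 q"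
      have s: "sin (t - t0) \<noteq> 0" using t by (intro sin_nz) (auto simp: dist_real_def)
      have "phi dx dy t p - phi dx dy t q = sin (t - t0) * (psi dx dy t0 p - psi dx dy t0 q)"
        using h phi_psi[of dx dy t p t0] phi_psi[of dx dy t q t0] by (simp add: algebra_simps)
      moreover have "psi dx dy t0 p - psi dx dy t0 q \<noteq> 0" using psi_diff_nz[OF d] h by simp
      ultimately show "phi dx dy t p \<noteq> phi dx dy t q" using s by (metis eq_iff_diff_eq_0 mult_eq_0_iff)
    qed
  qed
  have neq: "eventually (\<lambda>t. t \<noteq> t0) (at t0)" by (simp add: eventually_at_filter)
  have E: "eventually (\<lambda>t. t \<noteq> t0 \<and> (\<forall>p\<in>P. \<forall>q\<in>P. (phi dx dy t0 p > phi dx dy t0 q \<longrightarrow> phi dx dy t p > phi dx dy t q)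
     \<and> (p \<noteq> q \<and> phi dx dy t0 p = phi dx dy t0 q \<longrightarrow> phi dx dy t p \<noteq> phi dx dy t q))) (at t0)"
    using eventually_ball_finite[OF fin E1] eventually_ball_finite[OF fin E2] neq
    by eventually_elim auto
  have h3: "\<forall>x\<in>P. \<forall>y\<in>P. \<forall>z\<in>P. x \<noteq> y \<and> phi dx dy t0 x = phi dx dy t0 y \<and> phi dx dy t0 z = phi dx dy t0 x
          \<longrightarrow> z = x \<or> z = y" by (rule gp_three[OF gp d])
  have h4: "\<forall>x\<in>P. \<forall>y\<in>P. x \<noteq> y \<and> phi dx dy t0 x = phi dx dy t0 y \<and> rk P (phi dx dy t0) x + 1 = N \<longrightarrow> (x \<in> A \<longleftrightarrow> y \<in> A)"
  proof (intro ballI impI)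
    fix x y assume "x \<in> P" "y \<in> P" and h: "x \<noteq> y \<and> phi dx dy t0 x = phi dx dy t0 y \<and> rk P (phi dx dy t0) x + 1 = N"
    then have "halving_line P x y" using halv[OF fin gp cP _ _ _ _ _ d] by blast
    then show "x \<in> A \<longleftrightarrow> y \<in> A" using cl halving_sym by blast
  qed
  show ?thesis using E
  proof eventually_elim
    case (elim t)
    show ?case
      by (rule comb[symmetric, OF fin AP _ _ h3 h4]) (use elim in auto)
  qed
qed


theorem mainTheorem2:
  fixes P A :: "point set" and a b :: point
  assumes "finite P"
    and "general_position P"
    and "even (card P)"
    and "\<exists>C \<subseteq> ug_components P. A = \<Union>C"
    and "a \<in> A" and "b \<in> A"
    and "halving_line P a b"
  shows "card (left_side A a b) = card (right_side A a b)"
proof -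
  note fin = assms(1) and gp = assms(2)
  have AP: "A \<subseteq> P" using assms(4) unfolding ug_components_def ug_component_def by auto
  define N where "N = card P div 2"
  have cP: "card P = 2 * N" using assms(3) unfolding N_def by simp
  have hl: "a \<in> P" "b \<in> P" "a \<noteq> b" "card (left_side P a b) = N - 1" "card (right_side P a b) = N - 1"
    using assms(7) cP unfolding halving_line_def by auto
  have "card {a, b} \<le> card P" using hl fin by (intro card_mono) auto
  then have N1: "N \<ge> 1" using hl cP by simp
  define dx where "dx = fst b - fst a"
  define dy where "dy = snd b - snd a"
  have d: "(dx, dy) \<noteq> (0, 0)" using hl(3) unfolding dx_def dy_def by (auto simp: prod_eq_iff)
  have cl: "\<And>x y. halving_line P x y \<Longrightarrow> x \<in> A \<Longrightarrow> y \<in> A" using comp_closed[OF assms(4)] by blast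
  define F where "F t = (\<Sum>p\<in>A. wt P N (phi dx dy t) p)" for t
  have "F 0 = F pi"
    apply (rule connected_local_const[OF connected_UNIV, of 0 pi F])
    using locconst[OF fin AP gp cP d cl] unfolding F_def by auto
  have or0: "orient a b x = phi dx dy 0 x - phi dx dy 0 a" for x
    unfolding orient_def phi_def dx_def dy_def by (simp add: algebra_simps)
  have orpi: "phi dx dy pi x = - phi dx dy 0 x" for x unfolding phi_def by simp
  define c where "c = phi dx dy 0 a"
  have cb: "phi dx dy 0 b = c" using or0[of b] unfolding c_def orient_def by simp
  have oth: "\<forall>x\<in>P. x \<noteq> a \<and> x \<noteq> b \<longrightarrow> phi dx dy 0 x \<noteq> c"
    using gp hl or0 unfolding general_position_def collinear3_def c_def by fastforce
  have L: "{x\<in>S. phi dx dy 0 x > c} = left_side S a b" for S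
    unfolding left_side_def or0 c_def by auto
  have R: "{x\<in>S. phi dx dy pi x > - c} = right_side S a b" for S
    unfolding right_side_def or0 c_def orpi by auto
  have F0: "F 0 = real (card {x\<in>A. phi dx dy 0 x > c}) + 1"
    unfolding F_def
    by (rule endpt[OF fin AP assms(5,6) hl(3)]) (use c_def cb oth L hl N1 in auto)
  have Fpi: "F pi = real (card {x\<in>A. phi dx dy pi x > - c}) + 1"
    unfolding F_def
    by (rule endpt[OF fin AP assms(5,6) hl(3)]) (use c_def cb oth R hl N1 orpi in auto)
  show ?thesis using \<open>F 0 = F pi\<close> F0 Fpi L R by simp
qed

end
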